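(* Let $d\ge4$ be a fixed integer. Then, as $n\to\infty$ (with $dn$ even), asymptotically almost surely $\mathcal{G}_{n,d}$ is internally $2(d-1)$-edge-connected.
   Context: $\mathcal{G}_{n,d}$ is the uniformly random $d$-regular graph on $[n]$. A graph $G$ is internally $r$-edge-connected if for every vertex subset $A$ with $|A|\ge2$ and $|V(G)\setminus A|\ge2$, the number of edges between $A$ and $V(G)\setminus A$ is at least $r$. *)

theory Defs
  imports Complex_Main
begin

definition simple_graph_on :: "nat \<Rightarrow> nat set set \<Rightarrow> bool" where
  "simple_graph_on n E \<longleftrightarrow>
     (\<forall>e\<in>E. \<exists>u v. e = {u, v} \<and> u \<noteq> v \<and> u \<in> {1..n} \<and> v \<in> {1..n})"

definition degree :: "nat set set \<Rightarrow> nat \<Rightarrow> nat" where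
  "degree E v = card {e \<in> E. v \<in> e}"

definition regular_graphs :: "nat \<Rightarrow> nat \<Rightarrow> nat set set set" where
  "regular_graphs n d =
     {E. simple_graph_on n E \<and> (\<forall>v\<in>{1..n}. degree E v = d)}"

definition cut_size :: "nat set set \<Rightarrow> nat set \<Rightarrow> nat" where
  "cut_size E A = card {e \<in> E. e \<inter> A \<noteq> {} \<and> e - A \<noteq> {}}"

definition internally_edge_connected :: "nat \<Rightarrow> nat set set \<Rightarrow> nat \<Rightarrow> bool" where
  "internally_edge_connected n E r \<longleftrightarrow>
     (\<forall>A. A \<subseteq> {1..n} \<and> card A \<ge> 2 \<and> card ({1..n} - A) \<ge> 2 \<longrightarrow> cut_size E A \<ge> r)"

definition prob_reg :: "nat \<Rightarrow> nat \<Rightarrow> (nat set set \<Rightarrow> bool) \<Rightarrow> real" where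
  "prob_reg n d P = real (card {E \<in> regular_graphs n d. P E}) / real (card (regular_graphs n d))"

end

theory Submission
  imports Defs
begin


definition nbr :: "nat set set \<Rightarrow> nat \<Rightarrow> nat set" where
  "nbr G x = {y. {x,y} \<in> G}"
definition OC :: "nat set set \<Rightarrow> nat set \<Rightarrow> (nat \<times> nat) set" where
  "OC G S = {(x,y). {x,y} \<in> G \<and> x \<in> S \<and> y \<notin> S}"
definition INS :: "nat set set \<Rightarrow> nat set \<Rightarrow> (nat \<times> nat) set" where
  "INS G S = {(x,y). {x,y} \<in> G \<and> x \<in> S \<and> y \<in> S}"

lemma edgeE:
  assumes "simple_graph_on n G" "e \<in> G"
  obtains u v where "e = {u,v}" "u \<noteq> v" "u \<in> {1..n}" "v \<in> {1..n}"
proof -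
  have "\<exists>u v. e = {u, v} \<and> u \<noteq> v \<and> u \<in> {1..n} \<and> v \<in> {1..n}"
    using assms unfolding simple_graph_on_def by (rule bspec)
  then obtain u v where "e = {u, v} \<and> u \<noteq> v \<and> u \<in> {1..n} \<and> v \<in> {1..n}" by (elim exE)
  then show ?thesis using that by (elim conjE)
qed

lemma edge_in:
  assumes "simple_graph_on n G" "{x,y} \<in> G"
  shows "x \<in> {1..n}" "y \<in> {1..n}" "x \<noteq> y"
proof -
  obtain u v where "{x,y} = {u,v}" "u \<noteq> v" "u \<in> {1..n}" "v \<in> {1..n}"
    by (rule edgeE[OF assms])
  then show "x \<in> {1..n}" "y \<in> {1..n}" "x \<noteq> y" by (auto simp: doubleton_eq_iff)
qed

lemma nbr_sub: "simple_graph_on n G \<Longrightarrow> nbr G x \<subseteq> {1..n}"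
  unfolding nbr_def using edge_in by blast

lemma finite_nbr: "simple_graph_on n G \<Longrightarrow> finite (nbr G x)"
  by (rule finite_subset[OF nbr_sub]) auto

lemma card_nbr:
  assumes "G \<in> regular_graphs n d" "x \<in> {1..n}"
  shows "card (nbr G x) = d"
proof -
  have sg: "simple_graph_on n G" and dg: "degree G x = d"
    using assms unfolding regular_graphs_def by auto
  have "bij_betw (\<lambda>y. {x,y}) (nbr G x) {e\<in>G. x\<in>e}"
  proof (rule bij_betwI')
    show "\<And>y y'. y \<in> nbr G x \<Longrightarrow> y' \<in> nbr G x \<Longrightarrow> ({x, y} = {x, y'}) = (y = y')"
      by (auto simp: doubleton_eq_iff)
    show "\<And>y. y \<in> nbr G x \<Longrightarrow> {x, y} \<in> {e \<in> G. x \<in> e}" by (simp add: nbr_def)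
    fix e assume ee: "e \<in> {e \<in> G. x \<in> e}"
    then have he: "e \<in> G" "x \<in> e" by auto
    obtain u v where "e = {u,v}" "u \<noteq> v" "u \<in> {1..n}" "v \<in> {1..n}" by (rule edgeE[OF sg he(1)])
    then have e: "e = {u,v}" "e \<in> G" "x \<in> e" using he by auto
    show "\<exists>y\<in>nbr G x. e = {x, y}"
    proof (cases "x = u")
      case True then show ?thesis using e by (auto simp: nbr_def)
    next
      case False then have "x = v" using e by auto
      then show ?thesis using e by (auto simp: nbr_def insert_commute)
    qed
  qed
  then have "card (nbr G x) = card {e\<in>G. x\<in>e}" by (rule bij_betw_same_card)
  then show ?thesis using dg unfolding degree_def by simp
qed

lemma nbr_sym: "y \<in> nbr G x \<longleftrightarrow> x \<in> nbr G y"
  by (simp add: nbr_def insert_commute)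

lemma finite_OC: "simple_graph_on n G \<Longrightarrow> OC G S \<subseteq> {1..n} \<times> {1..n}"
  unfolding OC_def using edge_in by blast

lemma finite_INS: "simple_graph_on n G \<Longrightarrow> INS G S \<subseteq> {1..n} \<times> {1..n}"
  unfolding INS_def using edge_in by blast

lemma fin_INS: "simple_graph_on n G \<Longrightarrow> finite (INS G S)"
  by (rule finite_subset[OF finite_INS]) auto
lemma fin_OC: "simple_graph_on n G \<Longrightarrow> finite (OC G S)"
  by (rule finite_subset[OF finite_OC]) auto

lemma INS_OC:
  assumes "G \<in> regular_graphs n d" "S \<subseteq> {1..n}"
  shows "card (INS G S) + card (OC G S) = d * card S"
proof -
  have sg: "simple_graph_on n G" using assms unfolding regular_graphs_def by auto
  have fS: "finite S" using assms(2) by (rule finite_subset) simp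
  have eq: "Sigma S (nbr G) = INS G S \<union> OC G S"
    unfolding INS_def OC_def nbr_def by auto
  have "card (Sigma S (nbr G)) = (\<Sum>x\<in>S. card (nbr G x))"
    using fS finite_nbr[OF sg] by (intro card_SigmaI) auto
  also have "\<dots> = (\<Sum>x\<in>S. d)" using card_nbr[OF assms(1)] assms(2) by (intro sum.cong) auto
  finally have "card (Sigma S (nbr G)) = d * card S" by simp
  moreover have "card (INS G S \<union> OC G S) = card (INS G S) + card (OC G S)"
    apply (rule card_Un_disjoint[OF fin_INS[OF sg] fin_OC[OF sg]])
    unfolding INS_def OC_def by auto
  ultimately show ?thesis by (metis eq)
qed

lemma cut_OC:
  assumes "simple_graph_on n G"
  shows "cut_size G S = card (OC G S)"
proof -
  have "bij_betw (\<lambda>(x,y). {x,y}) (OC G S) {e\<in>G. e \<inter> S \<noteq> {} \<and> e - S \<noteq> {}}"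
  proof (rule bij_betwI')
    show "\<And>p q. p \<in> OC G S \<Longrightarrow> q \<in> OC G S \<Longrightarrow> ((case p of (x, y) \<Rightarrow> {x, y}) = (case q of (x, y) \<Rightarrow> {x, y})) = (p = q)"
      unfolding OC_def by (auto simp: doubleton_eq_iff)
    show "(case p of (x, y) \<Rightarrow> {x, y}) \<in> {e \<in> G. e \<inter> S \<noteq> {} \<and> e - S \<noteq> {}}"
      if pin: "p \<in> OC G S" for p
    proof -
      obtain x y where "p = (x,y)" "{x,y} \<in> G" "x \<in> S" "y \<notin> S" using pin unfolding OC_def by blast
      moreover have "{x,y} \<inter> S \<noteq> {}" "{x,y} - S \<noteq> {}" using calculation by blast+
      ultimately show ?thesis by simp
    qed
    fix e assume "e \<in> {e \<in> G. e \<inter> S \<noteq> {} \<and> e - S \<noteq> {}}"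
    then have he: "e \<in> G" "e \<inter> S \<noteq> {}" "e - S \<noteq> {}" by auto
    obtain u v where "e = {u,v}" "u \<noteq> v" "u \<in> {1..n}" "v \<in> {1..n}" by (rule edgeE[OF assms he(1)])
    then have e: "e = {u,v}" "e \<in> G" "e \<inter> S \<noteq> {}" "e - S \<noteq> {}" using he by auto
    show "\<exists>p\<in>OC G S. e = (case p of (x, y) \<Rightarrow> {x, y})"
    proof (cases "u \<in> S")
      case True
      then have "v \<notin> S" using e by auto
      have "(u,v) \<in> OC G S" using e True \<open>v \<notin> S\<close> by (simp add: OC_def)
      moreover have "e = (case (u,v) of (x, y) \<Rightarrow> {x, y})" using e by simp
      ultimately show ?thesis by blast
    next
      case False
      then have "v \<in> S" using e by auto
      have "(v,u) \<in> OC G S" using e False \<open>v \<in> S\<close> by (simp add: OC_def insert_commute)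
      moreover have "e = (case (v,u) of (x, y) \<Rightarrow> {x, y})" using e by (simp add: insert_commute)
      ultimately show ?thesis by blast
    qed
  qed
  then show ?thesis unfolding cut_size_def by (simp add: bij_betw_same_card)
qed

lemma OC_compl:
  assumes "simple_graph_on n G"
  shows "card (OC G ({1..n} - S)) = card (OC G S)"
proof -
  have "OC G ({1..n} - S) = (\<lambda>(x,y). (y,x)) ` OC G S"
  proof
    show "OC G ({1..n} - S) \<subseteq> (\<lambda>(x,y). (y,x)) ` OC G S"
    proof
      fix p assume p: "p \<in> OC G ({1..n} - S)"
      then obtain x y where "p = (x,y)" "{x,y} \<in> G" "x \<in> {1..n} - S" "y \<notin> {1..n} - S"
        unfolding OC_def by auto
      moreover then have "y \<in> {1..n}" using edge_in[OF assms] by blast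
      ultimately show "p \<in> (\<lambda>(x,y). (y,x)) ` OC G S"
        by (auto simp: OC_def insert_commute intro!: image_eqI[of _ _ "(y,x)"])
    qed
    show "(\<lambda>(x,y). (y,x)) ` OC G S \<subseteq> OC G ({1..n} - S)"
      using edge_in[OF assms] by (auto simp: OC_def insert_commute)
  qed
  moreover have "inj_on (\<lambda>(x,y). (y,x)) (OC G S)" by (auto simp: inj_on_def)
  ultimately show ?thesis by (simp add: card_image)
qed


definition FW :: "nat \<Rightarrow> nat set set \<Rightarrow> nat set \<Rightarrow> ((nat \<times> nat) \<times> (nat \<times> nat)) set" where
  "FW n G S = {((x,y),(u,v)). (x,y) \<in> INS G S \<and> (u,v) \<in> INS G ({1..n} - S) \<and> {x,u} \<notin> G \<and> {y,v} \<notin> G}"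

definition BW :: "nat set set \<Rightarrow> nat set \<Rightarrow> ((nat \<times> nat) \<times> (nat \<times> nat)) set" where
  "BW G S = {((x,y),(u,v)). (x,u) \<in> OC G S \<and> (y,v) \<in> OC G S \<and> x \<noteq> y \<and> u \<noteq> v \<and> {x,y} \<notin> G \<and> {u,v} \<notin> G}"

definition sw :: "nat set set \<Rightarrow> ((nat \<times> nat) \<times> (nat \<times> nat)) \<Rightarrow> nat set set" where
  "sw G t = (case t of ((x,y),(u,v)) \<Rightarrow> (G - {{x,y},{u,v}}) \<union> {{x,u},{y,v}})"

lemma card_filter2:
  assumes "a \<noteq> b"
  shows "card {e \<in> {a,b}. P e} = (if P a then 1 else 0) + (if P b then 1 else 0)"
proof -
  have "{e \<in> {a,b}. P e} = (if P a then {a} else {}) \<union> (if P b then {b} else {})" by auto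
  then show ?thesis using assms by (auto simp: card_insert_if)
qed

lemma degree_swap:
  assumes fin: "finite G" and e: "e1 \<in> G" "e2 \<in> G" "e1 \<noteq> e2" and f: "f1 \<notin> G" "f2 \<notin> G" "f1 \<noteq> f2"
    and cnt: "(if w \<in> e1 then 1 else 0) + (if w \<in> e2 then 1 else (0::nat))
            = (if w \<in> f1 then 1 else 0) + (if w \<in> f2 then 1 else 0)"
  shows "degree ((G - {e1,e2}) \<union> {f1,f2}) w = degree G w"
proof -
  let ?P = "{e\<in>G. w \<in> e}" and ?Q = "{e\<in>{e1,e2}. w \<in> e}" and ?F = "{e\<in>{f1,f2}. w \<in> e}"
  have eq: "{e \<in> (G - {e1,e2}) \<union> {f1,f2}. w \<in> e} = (?P - ?Q) \<union> ?F" by blast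
  have fP: "finite ?P" using fin by simp
  have sub: "?Q \<subseteq> ?P" using e by blast
  have "card ((?P - ?Q) \<union> ?F) = card (?P - ?Q) + card ?F"
    by (rule card_Un_disjoint) (use fP f in auto)
  also have "card (?P - ?Q) = card ?P - card ?Q" using sub fP by (simp add: card_Diff_subset finite_subset)
  also have "card ?Q = card ?F" using cnt card_filter2[OF e(3)] card_filter2[OF f(3)] by simp
  also have "card ?P - card ?F + card ?F = card ?P"
  proof -
    have "card ?Q \<le> card ?P" using sub fP by (rule card_mono[rotated])
    then show ?thesis using \<open>card ?Q = card ?F\<close> by simp
  qed
  finally show ?thesis unfolding degree_def using eq by simp
qed

lemma fin_RG: "finite (regular_graphs n d)"
proof -
  have "regular_graphs n d \<subseteq> Pow (Pow {1..n})"
  proof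
    fix G assume "G \<in> regular_graphs n d"
    then have sg: "simple_graph_on n G" unfolding regular_graphs_def by simp
    have "e \<subseteq> {1..n}" if eG: "e \<in> G" for e
    proof -
      obtain u v where "e = {u,v}" "u \<noteq> v" "u \<in> {1..n}" "v \<in> {1..n}" by (rule edgeE[OF sg eG])
      then show ?thesis by simp
    qed
    then show "G \<in> Pow (Pow {1..n})" by blast
  qed
  then show ?thesis by (rule finite_subset) simp
qed

lemma fin_graph: "G \<in> regular_graphs n d \<Longrightarrow> finite G"
proof -
  assume "G \<in> regular_graphs n d"
  then have sg: "simple_graph_on n G" unfolding regular_graphs_def by simp
  have "G \<subseteq> Pow {1..n}"
  proof
    fix e assume "e \<in> G"
    obtain u v where "e = {u,v}" "u \<noteq> v" "u \<in> {1..n}" "v \<in> {1..n}" by (rule edgeE[OF sg \<open>e \<in> G\<close>])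
    then show "e \<in> Pow {1..n}" by simp
  qed
  then show ?thesis by (rule finite_subset) simp
qed

lemma sw_props:
  assumes G: "G \<in> regular_graphs n d" and S: "S \<subseteq> {1..n}"
    and t: "((x,y),(u,v)) \<in> FW n G S"
  shows "sw G ((x,y),(u,v)) \<in> regular_graphs n d"
    and "OC (sw G ((x,y),(u,v))) S = insert (x,u) (insert (y,v) (OC G S))"
    and "(x,u) \<notin> OC G S" "(y,v) \<notin> OC G S" "(x,u) \<noteq> (y,v)"
    and "((x,y),(u,v)) \<in> BW (sw G ((x,y),(u,v))) S"
    and "(sw G ((x,y),(u,v)) - {{x,u},{y,v}}) \<union> {{x,y},{u,v}} = G"
proof -
  have sg: "simple_graph_on n G" and reg: "\<forall>w\<in>{1..n}. degree G w = d"
    using G unfolding regular_graphs_def by auto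
  have h: "{x,y} \<in> G" "x \<in> S" "y \<in> S" "{u,v} \<in> G" "u \<in> {1..n}" "v \<in> {1..n}" "u \<notin> S" "v \<notin> S"
     "{x,u} \<notin> G" "{y,v} \<notin> G"
    using t unfolding FW_def INS_def by auto
  have xy: "x \<noteq> y" using edge_in[OF sg h(1)] by simp
  have uv: "u \<noteq> v" using edge_in[OF sg h(4)] by simp
  have d: "x \<noteq> u" "x \<noteq> v" "y \<noteq> u" "y \<noteq> v" using h by auto
  have xV: "x \<in> {1..n}" "y \<in> {1..n}" using h S by auto
  define G' where "G' = sw G ((x,y),(u,v))"
  have G'eq: "G' = (G - {{x,y},{u,v}}) \<union> {{x,u},{y,v}}" unfolding G'_def sw_def by simp
  have ne: "{x,y} \<noteq> {u,v}" "{x,u} \<noteq> {y,v}" using xy d by (auto simp: doubleton_eq_iff)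
  have sg': "simple_graph_on n G'"
    unfolding simple_graph_on_def
  proof
    fix e assume "e \<in> G'"
    then consider "e \<in> G" | "e = {x,u}" | "e = {y,v}" unfolding G'eq by blast
    then show "\<exists>a b. e = {a, b} \<and> a \<noteq> b \<and> a \<in> {1..n} \<and> b \<in> {1..n}"
    proof cases
      case 1
      obtain a b where "e = {a,b}" "a \<noteq> b" "a \<in> {1..n}" "b \<in> {1..n}" by (rule edgeE[OF sg 1])
      then show ?thesis by blast
    next
      case 2 then show ?thesis using d xV h by blast
    next
      case 3 then show ?thesis using d xV h by blast
    qed
  qed
  have deg': "degree G' w = d" if "w \<in> {1..n}" for w
  proof -
    have "degree G' w = degree G w"
      unfolding G'eq
      by (rule degree_swap[OF fin_graph[OF G] h(1) h(4) ne(1) h(9) h(10) ne(2)])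
         (use xy uv d h in \<open>auto\<close>)
    then show ?thesis using reg that by simp
  qed
  show "sw G ((x,y),(u,v)) \<in> regular_graphs n d"
    using sg' deg' unfolding G'_def[symmetric] regular_graphs_def by simp
  show OCeq: "OC (sw G ((x,y),(u,v))) S = insert (x,u) (insert (y,v) (OC G S))"
    unfolding G'_def[symmetric]
  proof (rule set_eqI)
    fix p :: "nat \<times> nat"
    obtain a b where p: "p = (a,b)" by (cases p)
    show "p \<in> OC G' S \<longleftrightarrow> p \<in> insert (x,u) (insert (y,v) (OC G S))"
    proof (cases "a \<in> S \<and> b \<notin> S")
      case True
      have n1: "{a,b} \<noteq> {x,y}" "{a,b} \<noteq> {u,v}" using True h by (auto simp: doubleton_eq_iff)
      have e1: "{a,b} = {x,u} \<longleftrightarrow> (a,b) = (x,u)" using True h by (auto simp: doubleton_eq_iff)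
      have e2: "{a,b} = {y,v} \<longleftrightarrow> (a,b) = (y,v)" using True h by (auto simp: doubleton_eq_iff)
      have "{a,b} \<in> G' \<longleftrightarrow> {a,b} \<in> G \<or> (a,b) = (x,u) \<or> (a,b) = (y,v)"
        unfolding G'eq using n1 e1 e2 by blast
      then show ?thesis using True unfolding p OC_def by auto
    next
      case False
      then show ?thesis unfolding p OC_def using h by auto
    qed
  qed
  show n3: "(x,u) \<notin> OC G S" "(y,v) \<notin> OC G S" using h unfolding OC_def by auto
  show "(x,u) \<noteq> (y,v)" using xy by simp
  have "{x,y} \<notin> G'" "{u,v} \<notin> G'" unfolding G'eq using ne d xy uv by (auto simp: doubleton_eq_iff)
  then show "((x,y),(u,v)) \<in> BW (sw G ((x,y),(u,v))) S"
    unfolding G'_def[symmetric] BW_def using OCeq[unfolded G'_def[symmetric]] xy uv by auto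
  show "(sw G ((x,y),(u,v)) - {{x,u},{y,v}}) \<union> {{x,y},{u,v}} = G"
    unfolding G'_def[symmetric] G'eq using h ne by blast
qed


lemma card_nbr_sigma:
  assumes G: "G \<in> regular_graphs n d" and x: "x \<in> {1..n}"
  shows "card (Sigma (nbr G x) (nbr G)) \<le> d * d"
proof -
  have sg: "simple_graph_on n G" using G unfolding regular_graphs_def by simp
  have "card (Sigma (nbr G x) (nbr G)) = (\<Sum>u\<in>nbr G x. card (nbr G u))"
    using finite_nbr[OF sg] by (intro card_SigmaI) auto
  also have "\<dots> = (\<Sum>u\<in>nbr G x. d)"
  proof (rule sum.cong)
    fix u assume "u \<in> nbr G x"
    then have "u \<in> {1..n}" using nbr_sub[OF sg] by blast
    then show "card (nbr G u) = d" by (rule card_nbr[OF G])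
  qed simp
  also have "\<dots> = d * d" using card_nbr[OF G x] by simp
  finally show ?thesis by simp
qed

lemma FW_card:
  assumes G: "G \<in> regular_graphs n d" and S: "S \<subseteq> {1..n}"
  shows "int (card (INS G S)) * (int (card (INS G ({1..n} - S))) - 2 * int d ^ 2) \<le> int (card (FW n G S))"
proof -
  have sg: "simple_graph_on n G" using G unfolding regular_graphs_def by simp
  let ?B = "INS G ({1..n} - S)"
  define P1 where "P1 x = Sigma (nbr G x) (nbr G)" for x
  define P2 where "P2 y = (\<lambda>(a,b). (b,a)) ` Sigma (nbr G y) (nbr G)" for y
  define F where "F = (\<lambda>(x,y). ?B - P1 x - P2 y)"
  have eq: "FW n G S = Sigma (INS G S) F"
  proof (rule set_eqI)
    fix t :: "(nat \<times> nat) \<times> (nat \<times> nat)"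
    obtain x y u v where t: "t = ((x,y),(u,v))" by (metis prod.collapse)
    show "t \<in> FW n G S \<longleftrightarrow> t \<in> Sigma (INS G S) F"
    proof
      assume "t \<in> FW n G S"
      then show "t \<in> Sigma (INS G S) F"
        unfolding t FW_def F_def P1_def P2_def INS_def nbr_def by (auto simp: insert_commute)
    next
      assume a: "t \<in> Sigma (INS G S) F"
      then have "(u,v) \<in> ?B" "{u,v} \<in> G" unfolding t F_def INS_def by auto
      then have uv: "v \<in> nbr G u" "u \<in> nbr G v" unfolding nbr_def by (auto simp: insert_commute)
      from a have "(u,v) \<notin> P1 x" "(u,v) \<notin> P2 y" unfolding t F_def by auto
      then have "u \<notin> nbr G x" "v \<notin> nbr G y" using uv unfolding P1_def P2_def by auto
      then show "t \<in> FW n G S" using a unfolding t FW_def F_def nbr_def by auto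
    qed
  qed
  have finB: "finite ?B" by (rule fin_INS[OF sg])
  have Fb: "int (card ?B) - 2 * int d ^ 2 \<le> int (card (F p))" if p: "p \<in> INS G S" for p
  proof -
    obtain x y where pxy: "p = (x,y)" by (cases p)
    have xV: "x \<in> {1..n}" "y \<in> {1..n}" using p S unfolding pxy INS_def by auto
    have c1: "card (P1 x) \<le> d * d" unfolding P1_def by (rule card_nbr_sigma[OF G xV(1)])
    have "card (P2 y) \<le> card (Sigma (nbr G y) (nbr G))" unfolding P2_def by (rule card_image_le) (use finite_nbr[OF sg] in auto)
    then have c2: "card (P2 y) \<le> d * d" using card_nbr_sigma[OF G xV(2)] by simp
    have "?B \<subseteq> (?B - P1 x - P2 y) \<union> P1 x \<union> P2 y" by blast
    then have "card ?B \<le> card ((?B - P1 x - P2 y) \<union> P1 x \<union> P2 y)"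
      by (rule card_mono[rotated]) (use finB finite_nbr[OF sg] in \<open>auto simp: P1_def P2_def\<close>)
    also have "\<dots> \<le> card (?B - P1 x - P2 y) + card (P1 x) + card (P2 y)"
      by (meson add_le_mono card_Un_le le_refl order_trans)
    finally have "card ?B \<le> card (F p) + d * d + d * d" unfolding F_def pxy using c1 c2 by simp
    then have "int (card ?B) \<le> int (card (F p) + d * d + d * d)" by (simp only: of_nat_le_iff)
    then have "int (card ?B) \<le> int (card (F p)) + 2 * (int d * int d)" by simp
    then show ?thesis by (simp add: power2_eq_square)
  qed
  have "int (card (FW n G S)) = (\<Sum>p\<in>INS G S. int (card (F p)))"
    unfolding eq using fin_INS[OF sg] finB
    by (subst card_SigmaI) (auto simp: F_def)
  also have "\<dots> \<ge> (\<Sum>p\<in>INS G S. int (card ?B) - 2 * int d ^ 2)"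
    by (rule sum_mono) (rule Fb)
  finally show ?thesis by simp
qed

lemma BW_card:
  assumes sg: "simple_graph_on n G"
  shows "card (BW G S) \<le> card (OC G S) ^ 2"
proof -
  have "BW G S \<subseteq> (\<lambda>((x,u),(y,v)). ((x,y),(u,v))) ` (OC G S \<times> OC G S)"
  proof
    fix t assume "t \<in> BW G S"
    then obtain x y u v where "t = ((x,y),(u,v))" "(x,u) \<in> OC G S" "(y,v) \<in> OC G S"
      unfolding BW_def by auto
    then show "t \<in> (\<lambda>((x,u),(y,v)). ((x,y),(u,v))) ` (OC G S \<times> OC G S)"
      by (auto intro!: image_eqI[of _ _ "((x,u),(y,v))"])
  qed
  then have "card (BW G S) \<le> card ((\<lambda>((x,u),(y,v)). ((x,y),(u,v))) ` (OC G S \<times> OC G S))"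
    by (rule card_mono[rotated]) (use fin_OC[OF sg] in auto)
  also have "\<dots> \<le> card (OC G S \<times> OC G S)" by (rule card_image_le) (use fin_OC[OF sg] in auto)
  also have "\<dots> = card (OC G S) ^ 2" by (simp add: card_cartesian_product power2_eq_square)
  finally show ?thesis .
qed

lemma fin_BW: "simple_graph_on n G \<Longrightarrow> finite (BW G S)"
proof -
  assume sg: "simple_graph_on n G"
  have "BW G S \<subseteq> ({1..n} \<times> {1..n}) \<times> ({1..n} \<times> {1..n})"
    using finite_OC[OF sg, of S] unfolding BW_def by auto
  then show ?thesis by (rule finite_subset) simp
qed

lemma fin_FW: "simple_graph_on n G \<Longrightarrow> finite (FW n G S)"
proof -
  assume sg: "simple_graph_on n G"
  have "FW n G S \<subseteq> INS G S \<times> INS G ({1..n} - S)" unfolding FW_def by auto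
  then show ?thesis by (rule finite_subset) (use fin_INS[OF sg] in auto)
qed

definition XC :: "nat \<Rightarrow> nat \<Rightarrow> nat set \<Rightarrow> nat \<Rightarrow> nat set set set" where
  "XC n d S c = {G \<in> regular_graphs n d. card (OC G S) = c}"

lemma switching:
  assumes S: "S \<subseteq> {1..n}"
  shows "int (card (XC n d S c)) * ((int d * int (card S) - int c) * (int d * (int n - int (card S)) - int c - 2 * int d ^ 2))
         \<le> int (card (XC n d S (c+2))) * (int c + 2) ^ 2"
proof -
  let ?k = "card S"
  define T where "T = Sigma (XC n d S c) (\<lambda>G. FW n G S)"
  define T' where "T' = Sigma (XC n d S (c+2)) (\<lambda>G. BW G S)"
  define phi where "phi = (\<lambda>(G::nat set set, t::(nat \<times> nat) \<times> (nat \<times> nat)). (sw G t, t))"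
  have finX: "finite (XC n d S c')" for c' unfolding XC_def using fin_RG by simp
  have sgX: "simple_graph_on n G" if "G \<in> XC n d S c'" for G c'
    using that unfolding XC_def regular_graphs_def by simp
  have finT': "finite T'" unfolding T'_def using finX fin_BW sgX by blast
  have img: "phi ` T \<subseteq> T'"
  proof
    fix q assume "q \<in> phi ` T"
    then obtain G x y u v where G: "G \<in> XC n d S c" and t: "((x,y),(u,v)) \<in> FW n G S"
       and q: "q = phi (G, ((x,y),(u,v)))"
      unfolding T_def by auto
    have GR: "G \<in> regular_graphs n d" "card (OC G S) = c" using G unfolding XC_def by auto
    note P = sw_props[OF GR(1) S t]
    have fo: "finite (OC G S)" using fin_OC GR(1) unfolding regular_graphs_def by auto
    have "card (OC (sw G ((x,y),(u,v))) S) = c + 2" using P(2-5) GR(2) fo by simp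
    then have "sw G ((x,y),(u,v)) \<in> XC n d S (c+2)" using P(1) unfolding XC_def by simp
    then show "q \<in> T'" unfolding q phi_def T'_def using P(6) by simp
  qed
  have inj: "inj_on phi T"
  proof (rule inj_onI)
    fix p q assume p: "p \<in> T" and q: "q \<in> T" and eq: "phi p = phi q"
    obtain G t where pp: "p = (G,t)" by (cases p)
    obtain H t' where qq: "q = (H,t')" by (cases q)
    have tt: "t = t'" and sweq: "sw G t = sw H t" using eq unfolding pp qq phi_def by auto
    obtain x y u v where tx: "t = ((x,y),(u,v))" by (metis prod.collapse)
    have G: "G \<in> regular_graphs n d" "((x,y),(u,v)) \<in> FW n G S" using p unfolding pp T_def XC_def tx by auto
    have H: "H \<in> regular_graphs n d" "((x,y),(u,v)) \<in> FW n H S" using q tt unfolding qq T_def XC_def tx by auto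
    have "G = H" using sw_props(7)[OF G(1) S G(2)] sw_props(7)[OF H(1) S H(2)] sweq unfolding tx by metis
    then show "p = q" unfolding pp qq tt by simp
  qed
  have cT: "card T \<le> card T'"
    using card_inj_on_le[OF inj img finT'] .
  have "int (card (XC n d S c)) * ((int d * int ?k - int c) * (int d * (int n - int ?k) - int c - 2 * int d ^ 2))
        = (\<Sum>G\<in>XC n d S c. (int d * int ?k - int c) * (int d * (int n - int ?k) - int c - 2 * int d ^ 2))"
    by simp
  also have "\<dots> \<le> (\<Sum>G\<in>XC n d S c. int (card (FW n G S)))"
  proof (rule sum_mono)
    fix G assume G: "G \<in> XC n d S c"
    then have GR: "G \<in> regular_graphs n d" "card (OC G S) = c" unfolding XC_def by auto
    have sg: "simple_graph_on n G" using GR unfolding regular_graphs_def by simp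
    have Bsub: "{1..n} - S \<subseteq> {1..n}" by auto
    have cB: "card ({1..n} - S) = n - ?k" using card_Diff_subset[OF finite_subset[OF S finite_atLeastAtMost] S] by simp
    have kn: "?k \<le> n" using card_mono[OF finite_atLeastAtMost S] by simp
    have "int (card (INS G S) + c) = int (d * ?k)"
      using INS_OC[OF GR(1) S] GR(2) by simp
    then have i1: "int (card (INS G S)) = int d * int ?k - int c"
      unfolding of_nat_add of_nat_mult by linarith
    have "card (INS G ({1..n} - S)) + c = d * (n - ?k)"
      using INS_OC[OF GR(1) Bsub] OC_compl[OF sg, of S] GR(2) cB by simp
    then have "int (card (INS G ({1..n} - S)) + c) = int d * int (n - ?k)" by simp
    then have i2: "int (card (INS G ({1..n} - S))) = int d * (int n - int ?k) - int c"
      unfolding of_nat_add of_nat_diff[OF kn] by linarith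
    show "(int d * int ?k - int c) * (int d * (int n - int ?k) - int c - 2 * int d ^ 2) \<le> int (card (FW n G S))"
      using FW_card[OF GR(1) S] unfolding i1 i2 by simp
  qed
  also have "\<dots> = int (card T)"
    unfolding T_def using finX fin_FW sgX by (subst card_SigmaI) auto
  also have "\<dots> \<le> int (card T')" using cT by simp
  also have "\<dots> = (\<Sum>G\<in>XC n d S (c+2). int (card (BW G S)))"
    unfolding T'_def using finX by (subst card_SigmaI) (auto intro: fin_BW sgX)
  also have "\<dots> \<le> (\<Sum>G\<in>XC n d S (c+2). (int c + 2) ^ 2)"
  proof (rule sum_mono)
    fix G assume G: "G \<in> XC n d S (c+2)"
    have "card (BW G S) \<le> card (OC G S) ^ 2" using BW_card sgX[OF G] by blast
    then show "int (card (BW G S)) \<le> (int c + 2) ^ 2" using G unfolding XC_def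
      by (metis (mono_tags, lifting) mem_Collect_eq of_nat_add of_nat_le_iff of_nat_numeral of_nat_power)
  qed
  also have "\<dots> = int (card (XC n d S (c+2))) * (int c + 2) ^ 2" by simp
  finally show ?thesis .
qed


lemma iterate:
  fixes N a b :: "nat \<Rightarrow> real"
  shows "(\<forall>j<m. N (c + 2*j) * a (c + 2*j) \<le> N (c + 2*j + 2) * b (c + 2*j)) \<Longrightarrow>
    (\<forall>j<m. a (c + 2*j) > 0) \<Longrightarrow> (\<forall>c'. b c' \<ge> 0) \<Longrightarrow> (\<forall>c'. N c' \<ge> 0) \<Longrightarrow>
    N c \<le> N (c + 2*m) * (\<Prod>j<m. b (c + 2*j) / a (c + 2*j))"
proof (induction m arbitrary: c)
  case 0 show ?case by simp
next
  case (Suc m)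
  have p1: "\<forall>j<m. N (c + 2 + 2*j) * a (c + 2 + 2*j) \<le> N (c + 2 + 2*j + 2) * b (c + 2 + 2*j)"
  proof (intro allI impI)
    fix j assume "j < m"
    then have "Suc j < Suc m" by simp
    then have "N (c + 2*Suc j) * a (c + 2*Suc j) \<le> N (c + 2*Suc j + 2) * b (c + 2*Suc j)"
      using Suc.prems(1) by blast
    moreover have "c + 2*Suc j = c + 2 + 2*j" by simp
    ultimately show "N (c + 2 + 2*j) * a (c + 2 + 2*j) \<le> N (c + 2 + 2*j + 2) * b (c + 2 + 2*j)" by simp
  qed
  have p2: "\<forall>j<m. a (c + 2 + 2*j) > 0"
  proof (intro allI impI)
    fix j assume "j < m"
    then have "Suc j < Suc m" by simp
    then have "a (c + 2*Suc j) > 0" using Suc.prems(2) by blast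
    moreover have "c + 2*Suc j = c + 2 + 2*j" by simp
    ultimately show "a (c + 2 + 2*j) > 0" by simp
  qed
  have IH: "N (c+2) \<le> N (c + 2 + 2*m) * (\<Prod>j<m. b (c + 2 + 2*j) / a (c + 2 + 2*j))"
    using Suc.IH[OF p1 p2 Suc.prems(3) Suc.prems(4)] .
  have s0: "N c * a c \<le> N (c+2) * b c" using Suc.prems(1) by (metis add_0_right mult_0_right zero_less_Suc)
  have a0: "a c > 0" using Suc.prems(2) by (metis add_0_right mult_0_right zero_less_Suc)
  have "N c \<le> N (c+2) * (b c / a c)" using s0 a0 by (simp add: field_simps)
  also have "\<dots> \<le> (N (c + 2 + 2*m) * (\<Prod>j<m. b (c + 2 + 2*j) / a (c + 2 + 2*j))) * (b c / a c)"
    by (rule mult_right_mono[OF IH]) (use a0 Suc.prems(3) in auto)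
  also have "\<dots> = N (c + 2 * Suc m) * (\<Prod>j<Suc m. b (c + 2*j) / a (c + 2*j))"
  proof -
    have "(\<Prod>j<Suc m. b (c + 2*j) / a (c + 2*j)) = b (c + 2*0) / a (c + 2*0) * (\<Prod>j<m. b (c + 2*Suc j) / a (c + 2*Suc j))"
      by (rule prod.lessThan_Suc_shift)
    moreover have "(\<Prod>j<m. b (c + 2*Suc j) / a (c + 2*Suc j)) = (\<Prod>j<m. b (c + 2 + 2*j) / a (c + 2 + 2*j))"
      by (simp add: add.assoc)
    moreover have "c + 2 * Suc m = c + 2 + 2*m" by simp
    ultimately show ?thesis by simp
  qed
  finally show ?case .
qed

definition Phi :: "nat \<Rightarrow> nat \<Rightarrow> real" where
  "Phi d k = (\<Prod>j<k+2. (2 * real j + 2 * real d)^2 / (real d * real k - 2 * real d + 3 - 2 * real j))"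

lemma XC_bound:
  assumes S: "S \<subseteq> {1..n}" and d4: "d \<ge> 4" and k4: "card S \<ge> 4" and kn: "2 * card S \<le> n"
    and c: "c \<le> 2*d - 3" and nD: "real n > 2 * real d + 2 * real d ^ 2"
  shows "real (card (XC n d S c)) \<le> real (card (regular_graphs n d)) * Phi d (card S) / (real n - (2 * real d + 2 * real d ^ 2)) ^ (card S + 2)"
proof -
  let ?k = "card S"
  define D where "D = 2 * real d + 2 * real d ^ 2"
  define N where "N c' = real (card (XC n d S c'))" for c'
  define a where "a c' = (real d * real ?k - real c') * (real d * (real n - real ?k) - real c' - 2 * real d ^ 2)" for c'
  define b where "b c' = (real c' + 2) ^ 2" for c'
  have sw: "N c' * a c' \<le> N (c' + 2) * b c'" for c'
  proof -
    have "real_of_int (int (card (XC n d S c')) * ((int d * int ?k - int c') * (int d * (int n - int ?k) - int c' - 2 * int d ^ 2)))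
         \<le> real_of_int (int (card (XC n d S (c'+2))) * (int c' + 2) ^ 2)"
      using switching[OF S, of d c'] by linarith
    then show ?thesis unfolding N_def a_def b_def by simp
  qed
  have R: "N c' \<le> real (card (regular_graphs n d))" for c'
    unfolding N_def XC_def by (simp add: card_mono fin_RG)
  have dr: "real d \<ge> 4" "real ?k \<ge> 4" "2 * real ?k \<le> real n" "real c \<le> 2 * real d - 3"
    using d4 k4 kn c by auto
  have sj: "real d * real ?k - 2 * real d + 3 - 2 * real j \<ge> 1" if j: "j < ?k + 2" for j
  proof -
    have "real j \<le> real ?k + 1" using j by simp
    moreover have "(real d - 2) * real ?k \<ge> (real d - 2) * 4" using dr by (intro mult_left_mono) auto
    ultimately show ?thesis using dr by (simp add: algebra_simps)
  qed
  have tj: "real d * (real n - real ?k) - real (c + 2*j) - 2 * real d ^ 2 \<ge> real n - D" if j: "j < ?k + 2" for j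
  proof -
    have "real j \<le> real ?k + 1" using j by simp
    moreover have "real d * (real n - real ?k) \<ge> 4 * (real n - real ?k)" using dr by (intro mult_right_mono) auto
    ultimately show ?thesis using dr unfolding D_def by simp
  qed
  have aj: "a (c + 2*j) \<ge> (real d * real ?k - 2 * real d + 3 - 2 * real j) * (real n - D)" if j: "j < ?k + 2" for j
  proof -
    have "a (c + 2*j) = (real d * real ?k - real (c + 2*j)) * (real d * (real n - real ?k) - real (c + 2*j) - 2 * real d ^ 2)"
      unfolding a_def by simp
    moreover have "real (c + 2*j) = real c + 2 * real j" by simp
    then have "real d * real ?k - real (c + 2*j) \<ge> real d * real ?k - 2 * real d + 3 - 2 * real j" using dr(4) by linarith
    ultimately show ?thesis
      apply (simp only:)
      apply (rule mult_mono)
      using sj[OF j] tj[OF j] nD unfolding D_def by linarith+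
  qed
  have apos: "a (c + 2*j) > 0" if "j < ?k + 2" for j
  proof -
    have "0 < (real d * real ?k - 2 * real d + 3 - 2 * real j) * (real n - D)"
      using sj[OF that] nD unfolding D_def by simp
    then show ?thesis using aj[OF that] by linarith
  qed
  have it: "N c \<le> N (c + 2*(?k+2)) * (\<Prod>j<?k+2. b (c + 2*j) / a (c + 2*j))"
    apply (rule iterate)
    subgoal using sw by blast
    subgoal using apos by blast
    subgoal unfolding b_def by simp
    subgoal unfolding N_def by simp
    done
  have fac: "b (c + 2*j) / a (c + 2*j) \<le> (2 * real j + 2 * real d)^2 / (real d * real ?k - 2 * real d + 3 - 2 * real j) * (1 / (real n - D))"
    if j: "j < ?k + 2" for j
  proof -
    have "b (c + 2*j) \<le> (2 * real j + 2 * real d)^2" unfolding b_def using dr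
      by (intro power_mono) auto
    moreover have "0 \<le> b (c + 2*j)" unfolding b_def by simp
    ultimately have "b (c + 2*j) / a (c + 2*j) \<le> (2 * real j + 2 * real d)^2 / ((real d * real ?k - 2 * real d + 3 - 2 * real j) * (real n - D))"
      using aj[OF j] apos[OF j] sj[OF j] nD unfolding D_def
      by (intro frac_le) (auto intro: mult_pos_pos)
    then show ?thesis by simp
  qed
  have "(\<Prod>j<?k+2. b (c + 2*j) / a (c + 2*j)) \<le> (\<Prod>j<?k+2. (2 * real j + 2 * real d)^2 / (real d * real ?k - 2 * real d + 3 - 2 * real j) * (1 / (real n - D)))"
    by (rule prod_mono) (use fac apos in \<open>auto simp: b_def less_imp_le\<close>)
  also have "\<dots> = Phi d ?k / (real n - D) ^ (?k + 2)"
    unfolding Phi_def prod.distrib by (simp add: power_one_over)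
  finally have P: "(\<Prod>j<?k+2. b (c + 2*j) / a (c + 2*j)) \<le> Phi d ?k / (real n - D) ^ (?k + 2)" .
  have Pnn: "0 \<le> (\<Prod>j<?k+2. b (c + 2*j) / a (c + 2*j))"
    by (rule prod_nonneg) (use apos in \<open>auto simp: b_def less_imp_le\<close>)
  have "N c \<le> N (c + 2*(?k+2)) * (\<Prod>j<?k+2. b (c + 2*j) / a (c + 2*j))" by (rule it)
  also have "\<dots> \<le> real (card (regular_graphs n d)) * (Phi d ?k / (real n - D) ^ (?k + 2))"
    by (rule mult_mono[OF R P]) (use Pnn in auto)
  finally show ?thesis unfolding N_def D_def by simp
qed


definition Q :: "nat \<Rightarrow> nat \<Rightarrow> real" where
  "Q d k = 2^(k+2) * pochhammer (real d) (k+2) ^ 2 / (pochhammer (real k - real d) (k+2) * fact k)"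

lemma poch_pos: "a > 0 \<Longrightarrow> pochhammer (a::real) n > 0"
  by (simp add: pochhammer_prod prod_pos)

lemma Phi_le_Q:
  assumes d4: "d \<ge> 4" and kd: "k \<ge> d + 1"
  shows "Phi d k / fact k \<le> Q d k"
proof -
  have fac: "(2 * real j + 2 * real d)^2 / (real d * real k - 2 * real d + 3 - 2 * real j)
      \<le> 2 * (real d + real j)^2 / (2 * real k + 1 - real d - real j)" if j: "j < k + 2" for j
  proof -
    have jr: "real j \<le> real k + 1" using j by simp
    have dk: "real d * real k \<ge> 4 * real k" using d4 by (intro mult_right_mono) auto
    have p1: "2 * real k + 1 - real d - real j > 0" using jr kd by simp
    have le: "2 * (2 * real k + 1 - real d - real j) \<le> real d * real k - 2 * real d + 3 - 2 * real j"
      using dk by simp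
    have e: "(2 * real j + 2 * real d)^2 = 2 * (real d + real j)^2 * 2" by (simp add: power2_eq_square algebra_simps)
    have "(2 * real j + 2 * real d)^2 / (real d * real k - 2 * real d + 3 - 2 * real j) = 2 * (real d + real j)^2 * 2 / (real d * real k - 2 * real d + 3 - 2 * real j)"
      by (simp only: e)
    also have "\<dots> \<le> 2 * (real d + real j)^2 * 2 / (2 * (2 * real k + 1 - real d - real j))"
      by (rule divide_left_mono) (use le p1 in auto)
    also have "\<dots> = 2 * (real d + real j)^2 / (2 * real k + 1 - real d - real j)"
      using p1 by (simp add: field_simps)
    finally show ?thesis .
  qed
  have "Phi d k \<le> (\<Prod>j<k+2. 2 * (real d + real j)^2 / (2 * real k + 1 - real d - real j))"
    unfolding Phi_def
  proof (rule prod_mono)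
    fix j assume j: "j \<in> {..<k+2}"
    have jr: "real j \<le> real k + 1" using j by simp
    have dk: "real d * real k \<ge> 4 * real k" using d4 by (intro mult_right_mono) auto
    have kdr: "real k \<ge> real d + 1" using kd by simp
    have "real d * real k - 2 * real d + 3 - 2 * real j > 0" using dk jr kdr by linarith
    then show "0 \<le> (2 * real j + 2 * real d)^2 / (real d * real k - 2 * real d + 3 - 2 * real j) \<and>
      (2 * real j + 2 * real d)^2 / (real d * real k - 2 * real d + 3 - 2 * real j) \<le> 2 * (real d + real j)^2 / (2 * real k + 1 - real d - real j)"
      using fac j by auto
  qed
  also have "\<dots> = (\<Prod>j<k+2. 2) * (\<Prod>j<k+2. (real d + real j))^2 / (\<Prod>j<k+2. (2 * real k + 1 - real d - real j))"
  proof -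
    have "(\<Prod>j<k+2. 2 * (real d + real j)^2 / (2 * real k + 1 - real d - real j)) =
       (\<Prod>j<k+2. 2 * (real d + real j)^2) / (\<Prod>j<k+2. (2 * real k + 1 - real d - real j))"
      by (rule prod_dividef)
    also have "(\<Prod>j<k+2. 2 * (real d + real j)^2) = (\<Prod>j<k+2. 2) * (\<Prod>j<k+2. (real d + real j))^2"
      by (simp only: prod.distrib prod_power_distrib)
    finally show ?thesis .
  qed
  also have "(\<Prod>j<k+2. (real d + real j)) = pochhammer (real d) (k+2)"
    by (simp add: pochhammer_prod atLeast0LessThan)
  also have "(\<Prod>j<k+2. (2 * real k + 1 - real d - real j)) = pochhammer (real k - real d) (k+2)"
  proof -
    have "(\<Prod>j<k+2. (2 * real k + 1 - real d - real j)) = (\<Prod>j<k+2. (real k - real d + real (k + 2 - Suc j)))"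
      by (rule prod.cong) auto
    also have "\<dots> = (\<Prod>j<k+2. (real k - real d + real j))"
      by (rule prod.nat_diff_reindex)
    finally show ?thesis by (simp add: pochhammer_prod atLeast0LessThan)
  qed
  finally have "Phi d k \<le> 2^(k+2) * pochhammer (real d) (k+2) ^ 2 / pochhammer (real k - real d) (k+2)" by simp
  then have "Phi d k / fact k \<le> 2^(k+2) * pochhammer (real d) (k+2) ^ 2 / pochhammer (real k - real d) (k+2) / fact k"
    by (intro divide_right_mono) auto
  then show ?thesis unfolding Q_def by (simp add: field_simps)
qed

lemma poly_ineq:
  fixes k d :: real
  assumes d4: "d \<ge> 4" and k6: "k \<ge> 6 * d"
  shows "2 * (d + k + 2)^2 * (k - d) \<le> (2 * k + 2 - d) * (2 * k + 3 - d) * (k + 1)"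
proof -
  have a1: "k * k \<ge> 6 * (d * k)"
  proof -
    have "(6 * d) * k \<le> k * k" using k6 d4 by (intro mult_right_mono) auto
    then show ?thesis by (simp add: algebra_simps)
  qed
  have a2: "d * k \<ge> 4 * k" using d4 k6 by (intro mult_right_mono) auto
  have a3: "d * k \<ge> 6 * (d * d)"
  proof -
    have "d * (6 * d) \<le> d * k" using k6 d4 by (intro mult_left_mono) auto
    then show ?thesis by (simp add: algebra_simps)
  qed
  have a4: "d * d \<ge> 4 * d" using d4 by (intro mult_right_mono) auto
  have ex: "(2 * k - d)^2 - 2 * (d + k + 2)^2 = 2 * (k * k) - 8 * (d * k) - d * d - 8 * k - 8 * d - 8"
    by (simp add: power2_eq_square algebra_simps)
  have sq: "2 * (d + k + 2)^2 \<le> (2 * k - d)^2"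
    using a1 a2 a3 a4 d4 ex by linarith
  have b: "(2 * k - d)^2 \<le> (2 * k + 2 - d) * (2 * k + 3 - d)"
    using k6 d4 by (simp add: power2_eq_square algebra_simps)
  have "2 * (d + k + 2)^2 * (k - d) \<le> (2 * k - d)^2 * (k + 1)"
    by (rule mult_mono[OF sq]) (use k6 d4 in auto)
  also have "\<dots> \<le> (2 * k + 2 - d) * (2 * k + 3 - d) * (k + 1)"
    by (rule mult_right_mono[OF b]) (use k6 d4 in auto)
  finally show ?thesis .
qed

lemma Q_step:
  assumes d4: "d \<ge> 4" and k6: "k \<ge> 6 * d"
  shows "Q d (Suc k) \<le> Q d k"
proof -
  define P where "P = pochhammer (real d) (k+2)"
  define W where "W = pochhammer (real k - real d) (k+2)"
  have kd: "real k - real d > 0" using k6 d4 by simp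
  have Ppos: "P > 0" unfolding P_def using d4 by (intro poch_pos) auto
  have Wpos: "W > 0" unfolding W_def using kd by (intro poch_pos)
  have P1: "pochhammer (real d) (Suc k + 2) = P * (real d + real k + 2)"
    unfolding P_def by (simp add: pochhammer_Suc)
  have f1: "pochhammer (real k - real d) (k + 4) = (real k - real d) * pochhammer (real k - real d + 1) (k + 3)"
  proof -
    have "k + 4 = Suc (k + 3)" by simp
    then show ?thesis using pochhammer_rec[of "real k - real d" "k+3"] by (simp only:)
  qed
  have f2: "pochhammer (real k - real d) (k + 4) = W * (2 * real k + 2 - real d) * (2 * real k + 3 - real d)"
  proof -
    have "k + 4 = Suc (Suc (k + 2))" by simp
    then have "pochhammer (real k - real d) (k + 4) = pochhammer (real k - real d) (k + 2) * (real k - real d + of_nat (k+2)) * (real k - real d + of_nat (Suc (k+2)))"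
      by (simp only: pochhammer_Suc)
    moreover have "real k - real d + of_nat (k+2) = 2 * real k + 2 - real d" by simp
    moreover have "real k - real d + of_nat (Suc (k+2)) = 2 * real k + 3 - real d" by simp
    ultimately show ?thesis unfolding W_def by (simp add: algebra_simps)
  qed
  have f3: "pochhammer (real (Suc k) - real d) (Suc k + 2) = pochhammer (real k - real d + 1) (k + 3)"
  proof -
    have "real (Suc k) - real d = real k - real d + 1" "Suc k + 2 = k + 3" by simp_all
    then show ?thesis by (simp only:)
  qed
  have W1: "pochhammer (real (Suc k) - real d) (Suc k + 2) * (real k - real d) = W * (2 * real k + 2 - real d) * (2 * real k + 3 - real d)"
    unfolding f3 using f1 f2 by (simp add: algebra_simps)
  have fk: "fact (Suc k) = (real k + 1) * fact k" by (simp add: algebra_simps)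
  have r: "2 * (real d + real k + 2)^2 * (real k - real d) \<le> (2 * real k + 2 - real d) * (2 * real k + 3 - real d) * (real k + 1)"
    using poly_ineq[of "real d" "real k"] d4 k6 by simp
  have W1': "pochhammer (real (Suc k) - real d) (Suc k + 2) = W * (2 * real k + 2 - real d) * (2 * real k + 3 - real d) / (real k - real d)"
    using W1 kd by (simp add: field_simps)
  have "Q d (Suc k) = 2^(k+2) * P^2 / (W * fact k) * (2 * (real d + real k + 2)^2 * (real k - real d) / ((2 * real k + 2 - real d) * (2 * real k + 3 - real d) * (real k + 1)))"
    unfolding Q_def P1 W1' fk using kd Ppos Wpos by (simp add: field_simps power2_eq_square)
  also have "\<dots> \<le> 2^(k+2) * P^2 / (W * fact k) * 1"
  proof (rule mult_left_mono)
    have pos: "(2 * real k + 2 - real d) * (2 * real k + 3 - real d) * (real k + 1) > 0" using kd by simp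
    show "2 * (real d + real k + 2)^2 * (real k - real d) / ((2 * real k + 2 - real d) * (2 * real k + 3 - real d) * (real k + 1)) \<le> 1"
      using r pos by simp
    show "0 \<le> 2^(k+2) * P^2 / (W * fact k)" using Wpos by simp
  qed
  also have "\<dots> = Q d k" unfolding Q_def P_def W_def by simp
  finally show ?thesis .
qed

lemma Q_mono:
  assumes d4: "d \<ge> 4" and k6: "k \<ge> 6 * d"
  shows "Q d k \<le> Q d (6 * d)"
  using k6
proof (induction k rule: dec_induct)
  case base then show ?case by simp
next
  case (step m)
  then show ?case using Q_step[OF d4, of m] by linarith
qed

lemma psi_bounded:
  assumes d4: "d \<ge> 4"
  shows "\<exists>M. \<forall>k\<ge>4. Phi d k / fact k \<le> M"
proof -
  define M where "M = max (Q d (6*d)) (Max ((\<lambda>k. Phi d k / fact k) ` {4..6*d}))"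
  have "Phi d k / fact k \<le> M" if k: "k \<ge> 4" for k
  proof (cases "k \<ge> 6 * d")
    case True
    then have "Phi d k / fact k \<le> Q d k" using d4 by (intro Phi_le_Q) auto
    also have "\<dots> \<le> Q d (6*d)" using Q_mono[OF d4 True] .
    finally show ?thesis unfolding M_def by simp
  next
    case False
    then have "k \<in> {4..6*d}" using k by simp
    then have "Phi d k / fact k \<le> Max ((\<lambda>k. Phi d k / fact k) ` {4..6*d})" by (intro Max_ge) auto
    then show ?thesis unfolding M_def by simp
  qed
  then show ?thesis by blast
qed


definition ad :: "nat \<Rightarrow> nat \<Rightarrow> nat" where
  "ad a b = (if a \<le> b then b - a else a - b)"

definition TT :: "nat \<Rightarrow> nat \<Rightarrow> nat set" where
  "TT n d = {1..d div 2} \<union> {n - d div 2..n - 1} \<union> (if odd d then {n div 2} else {})"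

definition circ :: "nat \<Rightarrow> nat \<Rightarrow> nat set set" where
  "circ n d = {{a,b} | a b. a \<in> {1..n} \<and> b \<in> {1..n} \<and> ad a b \<in> TT n d}"

lemma ad_sym: "ad a b = ad b a" unfolding ad_def by auto

lemma TT_props:
  assumes n: "n \<ge> 2 * d + 2" and ev: "even (d * n)"
  shows "0 \<notin> TT n d" "\<And>t. t \<in> TT n d \<Longrightarrow> t < n" "\<And>t. t \<in> TT n d \<Longrightarrow> n - t \<in> TT n d"
    and "card (TT n d) = d"
proof -
  let ?h = "d div 2"
  show "0 \<notin> TT n d" unfolding TT_def using n by auto
  show "\<And>t. t \<in> TT n d \<Longrightarrow> t < n" unfolding TT_def using n by (auto split: if_splits)
  have nev: "odd d \<Longrightarrow> even n" using ev by simp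
  show "\<And>t. t \<in> TT n d \<Longrightarrow> n - t \<in> TT n d"
  proof -
    fix t assume t: "t \<in> TT n d"
    consider "t \<in> {1..?h}" | "t \<in> {n - ?h..n-1}" | "odd d" "t = n div 2"
      using t unfolding TT_def by (auto split: if_splits)
    then show "n - t \<in> TT n d"
    proof cases
      case 1 then show ?thesis unfolding TT_def using n by auto
    next
      case 2 then show ?thesis unfolding TT_def using n by auto
    next
      case 3 then show ?thesis unfolding TT_def using nev by auto
    qed
  qed
  have dis: "{1..?h} \<inter> {n - ?h..n - 1} = {}" using n by auto
  have c1: "card ({1..?h} \<union> {n - ?h..n - 1}) = 2 * ?h"
    using card_Un_disjoint[OF _ _ dis] n by simp
  show "card (TT n d) = d"
  proof (cases "odd d")
    case True
    have "n div 2 \<notin> {1..?h} \<union> {n - ?h..n - 1}" using n nev True by auto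
    then have "card (TT n d) = Suc (2 * ?h)" unfolding TT_def using True c1 by simp
    then show ?thesis using True by presburger
  next
    case False
    then show ?thesis unfolding TT_def using c1 by simp
  qed
qed

lemma circ_regular:
  assumes n: "n \<ge> 2 * d + 2" and ev: "even (d * n)"
  shows "circ n d \<in> regular_graphs n d"
proof -
  note TP = TT_props[OF n ev]
  have sg: "simple_graph_on n (circ n d)"
    unfolding simple_graph_on_def circ_def
  proof
    fix e assume "e \<in> {{a, b} |a b. a \<in> {1..n} \<and> b \<in> {1..n} \<and> ad a b \<in> TT n d}"
    then obtain a b where e: "e = {a,b}" "a \<in> {1..n}" "b \<in> {1..n}" "ad a b \<in> TT n d" by blast
    have "a \<noteq> b" using e(4) TP(1) unfolding ad_def by auto
    then show "\<exists>u v. e = {u, v} \<and> u \<noteq> v \<and> u \<in> {1..n} \<and> v \<in> {1..n}" using e by blast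
  qed
  have deg: "degree (circ n d) a = d" if a: "a \<in> {1..n}" for a
  proof -
    define N where "N = {b \<in> {1..n}. ad a b \<in> TT n d}"
    have b1: "bij_betw (\<lambda>b. {a,b}) N {e \<in> circ n d. a \<in> e}"
    proof (rule bij_betwI')
      show "\<And>x y. x \<in> N \<Longrightarrow> y \<in> N \<Longrightarrow> ({a, x} = {a, y}) = (x = y)" by (auto simp: doubleton_eq_iff)
      show "\<And>x. x \<in> N \<Longrightarrow> {a, x} \<in> {e \<in> circ n d. a \<in> e}"
        unfolding N_def circ_def using a by blast
      fix e assume "e \<in> {e \<in> circ n d. a \<in> e}"
      then obtain u v where e: "e = {u,v}" "u \<in> {1..n}" "v \<in> {1..n}" "ad u v \<in> TT n d" "a \<in> e"
        unfolding circ_def by blast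
      show "\<exists>x\<in>N. e = {a, x}"
      proof (cases "a = u")
        case True then show ?thesis using e unfolding N_def by blast
      next
        case False then have "a = v" using e by auto
        then show ?thesis using e ad_sym unfolding N_def by (metis (no_types, lifting) insert_commute mem_Collect_eq)
      qed
    qed
    define phi where "phi b = (if a < b then b - a else n + b - a)" for b
    have b2: "bij_betw phi N (TT n d)"
    proof (rule bij_betwI')
      fix x y assume x: "x \<in> N" and y: "y \<in> N"
      have xa: "x \<noteq> a" "y \<noteq> a" using x y TP(1) unfolding N_def ad_def by auto
      show "(phi x = phi y) = (x = y)" using x y xa a unfolding phi_def N_def by auto
    next
      fix x assume x: "x \<in> N"
      then have xT: "ad a x \<in> TT n d" "x \<in> {1..n}" unfolding N_def by auto
      show "phi x \<in> TT n d"
      proof (cases "a < x")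
        case True then show ?thesis using xT unfolding phi_def ad_def by simp
      next
        case False
        then have "x < a" using xT TP(1) unfolding ad_def by (cases "x = a") auto
        then have "phi x = n - ad a x" unfolding phi_def ad_def using xT a by auto
        then show ?thesis using TP(3)[OF xT(1)] by simp
      qed
    next
      fix t assume t: "t \<in> TT n d"
      have t1: "t \<ge> 1" "t < n" using t TP(1) TP(2) by (auto simp: Suc_le_eq intro: Nat.gr0I)
      show "\<exists>x\<in>N. t = phi x"
      proof (cases "a + t \<le> n")
        case True
        have "a + t \<in> N" unfolding N_def ad_def using True a t t1 by auto
        moreover have "phi (a + t) = t" unfolding phi_def using t1 by auto
        ultimately show ?thesis by metis
      next
        case False
        define b where "b = a + t - n"
        have bb: "b \<ge> 1" "b < a" "b \<le> n" using False t1 a unfolding b_def by auto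
        have "ad a b = n - t" unfolding ad_def b_def using False t1 a by auto
        then have "b \<in> N" unfolding N_def using bb TP(3)[OF t] by auto
        moreover have "phi b = t" unfolding phi_def b_def using False t1 a by auto
        ultimately show ?thesis by metis
      qed
    qed
    have "degree (circ n d) a = card N" unfolding degree_def using bij_betw_same_card[OF b1] by simp
    also have "\<dots> = card (TT n d)" using bij_betw_same_card[OF b2] .
    finally show ?thesis using TP(4) by simp
  qed
  show ?thesis unfolding regular_graphs_def using sg deg by blast
qed

lemma RG_nonempty:
  assumes n: "n \<ge> 2 * d + 2" and ev: "even (d * n)"
  shows "card (regular_graphs n d) > 0"
proof -
  have "finite (regular_graphs n d)"
  proof -
    have "regular_graphs n d \<subseteq> Pow (Pow {1..n})"
    proof
      fix G assume "G \<in> regular_graphs n d"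
      then have sg: "simple_graph_on n G" unfolding regular_graphs_def by simp
      show "G \<in> Pow (Pow {1..n})"
      proof (rule PowI, rule subsetI)
        fix e assume "e \<in> G"
        then have "\<exists>u v. e = {u, v} \<and> u \<noteq> v \<and> u \<in> {1..n} \<and> v \<in> {1..n}"
          using sg unfolding simple_graph_on_def by (rule_tac bspec) 
        then obtain u v where "e = {u, v} \<and> u \<noteq> v \<and> u \<in> {1..n} \<and> v \<in> {1..n}" by (elim exE)
        then show "e \<in> Pow {1..n}" by auto
      qed
    qed
    then show ?thesis by (rule finite_subset) simp
  qed
  moreover have "circ n d \<in> regular_graphs n d" by (rule circ_regular[OF n ev])
  ultimately show ?thesis by (auto simp: card_gt_0_iff)
qed


lemma INS_le:
  assumes sg: "simple_graph_on n G" and fA: "finite A"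
  shows "card (INS G A) \<le> card A * (card A - 1)"
proof -
  have "INS G A \<subseteq> Sigma A (\<lambda>x. A - {x})"
  proof
    fix p assume "p \<in> INS G A"
    then obtain x y where p: "p = (x,y)" "{x,y} \<in> G" "x \<in> A" "y \<in> A" unfolding INS_def by auto
    have "x \<noteq> y" by (rule edge_in(3)[OF sg p(2)])
    then show "p \<in> Sigma A (\<lambda>x. A - {x})" using p by auto
  qed
  then have "card (INS G A) \<le> card (Sigma A (\<lambda>x. A - {x}))"
    by (rule card_mono[rotated]) (use fA in auto)
  also have "\<dots> = (\<Sum>x\<in>A. card (A - {x}))" using fA by (intro card_SigmaI) auto
  also have "\<dots> = (\<Sum>x\<in>A. card A - 1)" by (rule sum.cong) (use fA in auto)
  finally show ?thesis by simp
qed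

lemma small_impossible:
  assumes G: "G \<in> regular_graphs n d" and A: "A \<subseteq> {1..n}" and k: "card A = 2 \<or> card A = 3" and d4: "d \<ge> 4"
  shows "card (OC G A) \<ge> 2 * d - 2"
proof (rule ccontr)
  assume c: "\<not> card (OC G A) \<ge> 2 * d - 2"
  have sg: "simple_graph_on n G" using G unfolding regular_graphs_def by simp
  have fA: "finite A" using A by (rule finite_subset) simp
  have e: "card (INS G A) + card (OC G A) = d * card A" by (rule INS_OC[OF G A])
  have le: "card (INS G A) \<le> card A * (card A - 1)" by (rule INS_le[OF sg fA])
  from k show False
  proof
    assume "card A = 2"
    then show False using e le c d4 by simp
  next
    assume "card A = 3"
    then show False using e le c d4 by simp
  qed
qed

lemma bad_cover:
  assumes G: "G \<in> regular_graphs n d" and d4: "d \<ge> 4"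
    and bad: "\<not> internally_edge_connected n G (2 * (d - 1))"
  shows "\<exists>k\<in>{4..n div 2}. \<exists>A\<in>{A. A \<subseteq> {1..n} \<and> card A = k}. \<exists>c\<in>{..<2*d-2}. G \<in> XC n d A c"
proof -
  have sg: "simple_graph_on n G" using G unfolding regular_graphs_def by simp
  obtain A where A: "A \<subseteq> {1..n}" "card A \<ge> 2" "card ({1..n} - A) \<ge> 2" "cut_size G A < 2 * (d - 1)"
    using bad unfolding internally_edge_connected_def by auto
  define A' where "A' = (if card A \<le> n div 2 then A else {1..n} - A)"
  have fA: "finite A" using A(1) by (rule finite_subset) simp
  have cB: "card ({1..n} - A) = n - card A"
    using card_Diff_subset[OF fA A(1)] by simp
  have A'sub: "A' \<subseteq> {1..n}" unfolding A'_def using A(1) by auto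
  have cA': "card A' \<le> n div 2" "card A' \<ge> 2" unfolding A'_def using A cB by auto
  have oc: "card (OC G A') = cut_size G A"
    unfolding A'_def using cut_OC[OF sg, of A] OC_compl[OF sg, of A] by auto
  have k4: "card A' \<ge> 4"
  proof (rule ccontr)
    assume "\<not> card A' \<ge> 4"
    then have "card A' = 2 \<or> card A' = 3" using cA' by auto
    then have "card (OC G A') \<ge> 2 * d - 2" by (rule small_impossible[OF G A'sub _ d4])
    then show False using oc A(4) by simp
  qed
  have "G \<in> XC n d A' (card (OC G A'))" unfolding XC_def using G by simp
  moreover have "card (OC G A') \<in> {..<2*d-2}" using oc A(4) by simp
  moreover have "A' \<in> {A. A \<subseteq> {1..n} \<and> card A = card A'}" using A'sub by simp
  moreover have "card A' \<in> {4..n div 2}" using k4 cA' by simp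
  ultimately show ?thesis by blast
qed

lemma Phi_nonneg:
  assumes d4: "d \<ge> 4" and k4: "k \<ge> 4"
  shows "Phi d k \<ge> 0"
  unfolding Phi_def
proof (rule prod_nonneg)
  fix j assume j: "j \<in> {..<k+2}"
  have jr: "real j \<le> real k + 1" using j by simp
  have "(real d - 2) * real k \<ge> (real d - 2) * 4" using d4 k4 by (intro mult_left_mono) auto
  then have "real d * real k - 2 * real d + 3 - 2 * real j \<ge> 1" using jr d4 by (simp add: algebra_simps)
  then show "0 \<le> (2 * real j + 2 * real d)\<^sup>2 / (real d * real k - 2 * real d + 3 - 2 * real j)" by simp
qed

lemma pow_ratio:
  fixes n D :: real and k :: nat
  assumes D: "D \<ge> 0" and nD: "n \<ge> 2 * D" and kn: "2 * real k \<le> n" and Dpos: "n - D > 0"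
  shows "n ^ k / (n - D) ^ k \<le> exp D"
proof -
  have "n / (n - D) = 1 + D / (n - D)" using Dpos by (simp add: field_simps)
  also have "\<dots> \<le> exp (D / (n - D))" by (rule exp_ge_add_one_self)
  finally have r: "n / (n - D) \<le> exp (D / (n - D))" .
  have "n ^ k / (n - D) ^ k = (n / (n - D)) ^ k" by (simp add: power_divide)
  also have "\<dots> \<le> exp (D / (n - D)) ^ k"
    by (rule power_mono[OF r]) (use Dpos nD D in auto)
  also have "\<dots> = exp (real k * (D / (n - D)))" by (rule exp_of_nat_mult[symmetric])
  also have "\<dots> \<le> exp D"
  proof -
    have "real k \<le> n - D" using kn nD by simp
    then have "real k * D \<le> (n - D) * D" using D by (intro mult_right_mono) auto
    then have "real k * (D / (n - D)) \<le> D" using Dpos by (simp add: field_simps)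
    then show ?thesis by simp
  qed
  finally show ?thesis .
qed


lemma alg: fixes x f a R P y :: real shows "x/f * (a*(R*P/y^(k+2))) = a*R*(x/y^k)*(P/f)/y^2"
  by (simp add: power_add divide_inverse ac_simps power2_eq_square inverse_mult_distrib)

lemma card_bad_le:
  assumes d4: "d \<ge> 4"
  shows "card {G \<in> regular_graphs n d. \<not> internally_edge_connected n G (2 * (d - 1))}
    \<le> (\<Sum>k\<in>{4..n div 2}. \<Sum>A\<in>{A. A \<subseteq> {1..n} \<and> card A = k}. \<Sum>c\<in>{..<2*d-2}. card (XC n d A c))"
proof -
  let ?Sub = "\<lambda>k. {A. A \<subseteq> {1..n} \<and> card A = k}"
  have finSub: "finite (?Sub k)" for k
    by (rule finite_subset[of _ "Pow {1..n}"]) auto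
  have finXC: "finite (XC n d A c)" for A c unfolding XC_def using fin_RG by simp
  have sub: "{G \<in> regular_graphs n d. \<not> internally_edge_connected n G (2 * (d - 1))}
     \<subseteq> (\<Union>k\<in>{4..n div 2}. \<Union>A\<in>?Sub k. \<Union>c\<in>{..<2*d-2}. XC n d A c)"
  proof
    fix G assume "G \<in> {G \<in> regular_graphs n d. \<not> internally_edge_connected n G (2 * (d - 1))}"
    then have G: "G \<in> regular_graphs n d" and bad: "\<not> internally_edge_connected n G (2 * (d - 1))" by auto
    obtain k where k: "k \<in> {4..n div 2}" and ex1: "\<exists>A\<in>?Sub k. \<exists>c\<in>{..<2*d-2}. G \<in> XC n d A c"
      using bad_cover[OF G d4 bad] by (erule bexE)
    obtain A where A: "A \<in> ?Sub k" and ex2: "\<exists>c\<in>{..<2*d-2}. G \<in> XC n d A c" using ex1 by (erule bexE)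
    obtain c where c: "c \<in> {..<2*d-2}" and Gc: "G \<in> XC n d A c" using ex2 by (erule bexE)
    from c Gc have "G \<in> (\<Union>c\<in>{..<2*d-2}. XC n d A c)" by (rule UN_I)
    then have "G \<in> (\<Union>A\<in>?Sub k. \<Union>c\<in>{..<2*d-2}. XC n d A c)" by (rule UN_I[OF A])
    then show "G \<in> (\<Union>k\<in>{4..n div 2}. \<Union>A\<in>?Sub k. \<Union>c\<in>{..<2*d-2}. XC n d A c)" by (rule UN_I[OF k])
  qed
  have finU: "finite (\<Union>k\<in>{4..n div 2}. \<Union>A\<in>?Sub k. \<Union>c\<in>{..<2*d-2}. XC n d A c)"
    using finSub finXC by auto
  have "card {G \<in> regular_graphs n d. \<not> internally_edge_connected n G (2 * (d - 1))}
     \<le> card (\<Union>k\<in>{4..n div 2}. \<Union>A\<in>?Sub k. \<Union>c\<in>{..<2*d-2}. XC n d A c)"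
    by (rule card_mono[OF finU sub])
  also have "\<dots> \<le> (\<Sum>k\<in>{4..n div 2}. card (\<Union>A\<in>?Sub k. \<Union>c\<in>{..<2*d-2}. XC n d A c))"
    by (rule card_UN_le) simp
  also have "\<dots> \<le> (\<Sum>k\<in>{4..n div 2}. \<Sum>A\<in>?Sub k. card (\<Union>c\<in>{..<2*d-2}. XC n d A c))"
    by (rule sum_mono, rule card_UN_le, rule finSub)
  also have "\<dots> \<le> (\<Sum>k\<in>{4..n div 2}. \<Sum>A\<in>?Sub k. \<Sum>c\<in>{..<2*d-2}. card (XC n d A c))"
    by (rule sum_mono, rule sum_mono, rule card_UN_le) simp
  finally show ?thesis .
qed

lemma term_bound:
  assumes d4: "d \<ge> 4" and k4: "k \<ge> 4" and kn: "k \<le> n div 2"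
    and nD: "real n \<ge> 2 * (2 * real d + 2 * real d ^ 2) + 1"
    and M: "Phi d k / fact k \<le> M'"
  shows "real (\<Sum>A\<in>{A. A \<subseteq> {1..n} \<and> card A = k}. \<Sum>c\<in>{..<2*d-2}. card (XC n d A c))
     \<le> (2 * real d - 2) * real (card (regular_graphs n d)) * exp (2 * real d + 2 * real d ^ 2) * M' / (real n - (2 * real d + 2 * real d ^ 2))^2"
proof -
  define D where "D = 2 * real d + 2 * real d ^ 2"
  define R where "R = real (card (regular_graphs n d))"
  let ?Sub = "{A. A \<subseteq> {1..n} \<and> card A = k}"
  have Dpos: "D \<ge> 0" unfolding D_def by simp
  have nD2: "real n \<ge> 2 * D + 1" using nD unfolding D_def by simp
  have nDpos: "real n - D > 0" using nD2 Dpos by linarith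
  have k2n: "2 * k \<le> n" using kn by simp
  have Rnn: "R \<ge> 0" unfolding R_def by simp
  have Phinn: "Phi d k \<ge> 0" by (rule Phi_nonneg[OF d4 k4])
  have one: "real (card (XC n d A c)) \<le> R * Phi d k / (real n - D) ^ (k + 2)"
    if A: "A \<in> ?Sub" and c: "c \<in> {..<2*d-2}" for A c
  proof -
    have "real (card (XC n d A c)) \<le> R * Phi d (card A) / (real n - D) ^ (card A + 2)"
      unfolding R_def D_def
      by (rule XC_bound) (use A c d4 k4 k2n nD in \<open>auto simp: D_def\<close>)
    then show ?thesis using A by simp
  qed
  have "real (\<Sum>A\<in>?Sub. \<Sum>c\<in>{..<2*d-2}. card (XC n d A c)) = (\<Sum>A\<in>?Sub. \<Sum>c\<in>{..<2*d-2}. real (card (XC n d A c)))"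
    by simp
  also have "\<dots> \<le> (\<Sum>A\<in>?Sub. \<Sum>c\<in>{..<2*d-2}. R * Phi d k / (real n - D) ^ (k + 2))"
    by (intro sum_mono one)
  also have "\<dots> = real (n choose k) * (real (2*d-2) * (R * Phi d k / (real n - D) ^ (k + 2)))"
  proof -
    have "card ?Sub = n choose k" using n_subsets[of "{1..n}" k] by simp
    then show ?thesis by simp
  qed
  also have "\<dots> \<le> (real n ^ k / fact k) * (real (2*d-2) * (R * Phi d k / (real n - D) ^ (k + 2)))"
  proof (rule mult_right_mono)
    have "(n choose k) * fact k \<le> n ^ k" by (rule binomial_fact_pow)
    then have "real (n choose k) * fact k \<le> real n ^ k"
      by (metis of_nat_fact of_nat_le_iff of_nat_mult of_nat_power)
    then show "real (n choose k) \<le> real n ^ k / fact k" by (simp add: field_simps)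
    show "0 \<le> real (2*d-2) * (R * Phi d k / (real n - D) ^ (k + 2))"
      using Rnn Phinn nDpos by simp
  qed
  also have "\<dots> = real (2*d-2) * R * (real n ^ k / (real n - D) ^ k) * (Phi d k / fact k) / (real n - D)^2"
    by (rule alg)
  also have "\<dots> \<le> real (2*d-2) * R * exp D * M' / (real n - D)^2"
  proof -
    have pr: "real n ^ k / (real n - D) ^ k \<le> exp D"
      by (rule pow_ratio) (use Dpos nD k2n nDpos in \<open>auto simp: D_def\<close>)
    have "real (2*d-2) * R * (real n ^ k / (real n - D) ^ k) * (Phi d k / fact k) \<le> real (2*d-2) * R * exp D * M'"
    proof (rule mult_mono)
      show "real (2*d-2) * R * (real n ^ k / (real n - D) ^ k) \<le> real (2*d-2) * R * exp D"
        using pr Rnn by (intro mult_left_mono) auto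
      show "Phi d k / fact k \<le> M'" by (rule M)
      show "0 \<le> real (2*d-2) * R * exp D" using Rnn by simp
      show "0 \<le> Phi d k / fact k" using Phinn by simp
    qed
    then show ?thesis by (intro divide_right_mono) auto
  qed
  finally show ?thesis unfolding D_def R_def using d4 by (simp add: of_nat_diff)
qed


lemma final_arith:
  fixes n D Z dd :: real
  assumes Z: "Z \<ge> 0" and D: "D \<ge> 0" and n: "n \<ge> 2 * D + 1" and dd: "dd \<ge> 4"
  shows "n * ((2 * dd - 2) * Z / (n - D)^2) \<le> 8 * dd * Z / n"
proof -
  have npos: "n > 0" using n D by linarith
  have y: "n - D \<ge> n / 2" using n D by linarith
  have ypos: "n - D > 0" using n D by linarith
  have y2: "(n - D)^2 \<ge> (n/2)^2" using y npos by (intro power_mono) auto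
  have "n * ((2 * dd - 2) * Z / (n - D)^2) = n * ((2 * dd - 2) * Z) / (n - D)^2" by simp
  also have "\<dots> \<le> n * ((2 * dd - 2) * Z) / (n/2)^2"
    by (rule divide_left_mono) (use y2 npos Z dd ypos in auto)
  also have "\<dots> = 4 * (2 * dd - 2) * Z / n" using npos by (simp add: power2_eq_square field_simps)
  also have "\<dots> \<le> 8 * dd * Z / n"
    by (rule divide_right_mono) (use Z dd npos in \<open>auto intro!: mult_right_mono\<close>)
  finally show ?thesis .
qed

theorem mainTheorem7:
  fixes d :: nat
  assumes "d \<ge> 4"
  shows "\<forall>\<epsilon>>0. \<exists>N. \<forall>n\<ge>N. even (d * n) \<longrightarrow>
           prob_reg n d (\<lambda>E. internally_edge_connected n E (2 * (d - 1))) \<ge> 1 - \<epsilon>"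
proof (intro allI impI)
  fix \<epsilon> :: real assume eps: "\<epsilon> > 0"
  note d4 = assms
  obtain M where M: "\<forall>k\<ge>4. Phi d k / fact k \<le> M" using psi_bounded[OF d4] by blast
  define M' where "M' = max M 1"
  define D where "D = 2 * real d + 2 * real d ^ 2"
  define C where "C = 8 * real d * exp D * M'"
  define N where "N = nat \<lceil>2 * D + 1 + C / \<epsilon>\<rceil> + 2 * d + 2"
  have Dnn: "D \<ge> 0" unfolding D_def by simp
  have Cnn: "C \<ge> 0" unfolding C_def M'_def by simp
  show "\<exists>N. \<forall>n\<ge>N. even (d * n) \<longrightarrow> prob_reg n d (\<lambda>E. internally_edge_connected n E (2 * (d - 1))) \<ge> 1 - \<epsilon>"
  proof (intro exI allI impI)
    fix n assume nN: "N \<le> n" and ev: "even (d * n)"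
    have "2 * D + 1 + C / \<epsilon> \<le> real (nat \<lceil>2 * D + 1 + C / \<epsilon>\<rceil>)" by linarith
    also have "\<dots> \<le> real n"
    proof -
      have "nat \<lceil>2 * D + 1 + C / \<epsilon>\<rceil> \<le> n" using nN unfolding N_def by linarith
      then show ?thesis by (simp only: of_nat_le_iff)
    qed
    finally have n1: "real n \<ge> 2 * D + 1 + C / \<epsilon>" .
    have n2: "n \<ge> 2 * d + 2" using nN unfolding N_def by simp
    have Ce: "C / \<epsilon> \<ge> 0" using Cnn eps by simp
    have nD: "real n \<ge> 2 * D + 1" using n1 Ce by linarith
    have npos: "real n > 0" using nD Dnn by linarith
    define R where "R = card (regular_graphs n d)"
    have Rpos: "R > 0" unfolding R_def by (rule RG_nonempty[OF n2 ev])
    define Good where "Good = {G \<in> regular_graphs n d. internally_edge_connected n G (2 * (d - 1))}"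
    define Bad where "Bad = {G \<in> regular_graphs n d. \<not> internally_edge_connected n G (2 * (d - 1))}"
    have part: "R = card Good + card Bad"
    proof -
      have "regular_graphs n d = Good \<union> Bad" unfolding Good_def Bad_def by auto
      moreover have "Good \<inter> Bad = {}" unfolding Good_def Bad_def by auto
      moreover have "finite Good" "finite Bad" unfolding Good_def Bad_def using fin_RG by auto
      ultimately show ?thesis unfolding R_def by (simp add: card_Un_disjoint)
    qed
    define B where "B = (2 * real d - 2) * real R * exp D * M' / (real n - D)^2"
    have hB: "real (card Bad) \<le> real n * B"
    proof -
      have "real (card Bad) \<le> real (\<Sum>k\<in>{4..n div 2}. \<Sum>A\<in>{A. A \<subseteq> {1..n} \<and> card A = k}. \<Sum>c\<in>{..<2*d-2}. card (XC n d A c))"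
        unfolding Bad_def using card_bad_le[OF d4, of n] by linarith
      also have "\<dots> = (\<Sum>k\<in>{4..n div 2}. real (\<Sum>A\<in>{A. A \<subseteq> {1..n} \<and> card A = k}. \<Sum>c\<in>{..<2*d-2}. card (XC n d A c)))"
        by (rule of_nat_sum)
      also have "\<dots> \<le> (\<Sum>k\<in>{4..n div 2}. B)"
      proof (rule sum_mono)
        fix k assume k: "k \<in> {4..n div 2}"
        have "Phi d k / fact k \<le> M'" using M k unfolding M'_def by fastforce
        then show "real (\<Sum>A\<in>{A. A \<subseteq> {1..n} \<and> card A = k}. \<Sum>c\<in>{..<2*d-2}. card (XC n d A c)) \<le> B"
          unfolding B_def R_def D_def
          by (intro term_bound) (use d4 k nD in \<open>auto simp: D_def\<close>)
      qed
      also have "\<dots> = real (card {4..n div 2}) * B" by simp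
      also have "\<dots> \<le> real n * B"
      proof (rule mult_right_mono)
        show "real (card {4..n div 2}) \<le> real n" by simp
        show "0 \<le> B" unfolding B_def M'_def using d4 by simp
      qed
      finally show ?thesis .
    qed
    have hB2: "real n * B \<le> real R * C / real n"
    proof -
      have "real n * B = real n * ((2 * real d - 2) * (real R * exp D * M') / (real n - D)^2)"
        unfolding B_def by (simp add: mult.assoc)
      also have "\<dots> \<le> 8 * real d * (real R * exp D * M') / real n"
        by (rule final_arith) (use Dnn nD d4 in \<open>auto simp: M'_def\<close>)
      also have "\<dots> = real R * C / real n" unfolding C_def by (simp add: ac_simps)
      finally show ?thesis .
    qed
    have Cn: "C / real n \<le> \<epsilon>"
    proof -
      have "C / \<epsilon> \<le> real n" using n1 Dnn by linarith
      then have "C \<le> real n * \<epsilon>" using eps by (simp add: field_simps)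
      then show ?thesis using npos by (simp add: field_simps)
    qed
    have "prob_reg n d (\<lambda>E. internally_edge_connected n E (2 * (d - 1))) = real (card Good) / real R"
      unfolding prob_reg_def Good_def R_def by simp
    also have "\<dots> = 1 - real (card Bad) / real R"
    proof -
      have "real (card Good) = real R - real (card Bad)" using part by simp
      moreover have "real R > 0" using Rpos by simp
      ultimately show ?thesis by (simp add: diff_divide_distrib)
    qed
    also have "\<dots> \<ge> 1 - C / real n"
    proof -
      have "real (card Bad) \<le> real R * C / real n" using hB hB2 by linarith
      then have "real (card Bad) / real R \<le> C / real n" using Rpos by (simp add: field_simps)
      then show ?thesis by simp
    qed
    finally show "prob_reg n d (\<lambda>E. internally_edge_connected n E (2 * (d - 1))) \<ge> 1 - \<epsilon>"
      using Cn by linarith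
  qed
qed


end
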